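(* Let $b$ be an integer with $2\le b\le 10$. All solutions of $$P_n=b^{d}Q_m+P_k$$ in nonnegative integers $n,m,k$, where $d$ is the number of digits of $P_k$ in base $b$, are given by the following representations (in particular $P_n\in\{5,12,29,70\}$): $$5=P_3=2^1Q_0+P_1=2^1Q_1+P_1,$$ $$12=P_4=5^1Q_0+P_2=5^1Q_1+P_2=2^1Q_2+P_0,$$ $$12=P_4=6^1Q_0+P_0=6^1Q_1+P_0,$$ $$29=P_5=2^1Q_3+P_1,$$ $$70=P_6=5^1Q_3+P_0.$$
   Context: $(P_n)_{n\ge0}$ is the Pell sequence: $P_0=0$, $P_1=1$, $P_n=2P_{n-1}+P_{n-2}$ for $n\ge2$. $(Q_n)_{n\ge0}$ is the Pell–Lucas sequence: $Q_0=2$, $Q_1=2$, $Q_n=2Q_{n-1}+Q_{n-2}$ for $n\ge2$. For a positive integer $N$, the number of digits of $N$ in base $b$ is $\lfloor \log_b N\rfloor+1$; the number $0$ (i.e. $P_0$) is taken to have $d=1$ digit. *)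

theory Defs
  imports Complex_Main
begin

fun pell :: "nat \<Rightarrow> nat" where
  "pell 0 = 0"
| "pell (Suc 0) = 1"
| "pell (Suc (Suc n)) = 2 * pell (Suc n) + pell n"

fun pell_lucas :: "nat \<Rightarrow> nat" where
  "pell_lucas 0 = 2"
| "pell_lucas (Suc 0) = 2"
| "pell_lucas (Suc (Suc n)) = 2 * pell_lucas (Suc n) + pell_lucas n"

definition num_digits :: "nat \<Rightarrow> nat \<Rightarrow> nat" where
  "num_digits b N = (if N = 0 then 1 else nat \<lfloor>log (real b) (real N)\<rfloor> + 1)"

end

theory Submission
  imports Defs "HOL-Computational_Algebra.Primes"
begin

definition al :: real where "al = 1 + sqrt 2"
definition be :: real where "be = 1 - sqrt 2"

lemma al_sq: "al*al = 2*al + 1" unfolding al_def by (simp add: algebra_simps)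
lemma be_sq: "be*be = 2*be + 1" unfolding be_def by (simp add: algebra_simps)
lemma al_be: "al * be = -1" unfolding al_def be_def by (simp add: algebra_simps)

lemma alrec: "al^(Suc (Suc n)) = 2*al^(Suc n) + al^n"
proof -
  have "al^(Suc (Suc n)) = al^n * (al*al)" by (simp add: algebra_simps)
  also have "... = 2*al^(Suc n) + al^n" by (simp add: al_sq algebra_simps)
  finally show ?thesis .
qed
lemma berec: "be^(Suc (Suc n)) = 2*be^(Suc n) + be^n"
proof -
  have "be^(Suc (Suc n)) = be^n * (be*be)" by (simp add: algebra_simps)
  also have "... = 2*be^(Suc n) + be^n" by (simp add: be_sq algebra_simps)
  finally show ?thesis .
qed

lemma binP: "real (pell n) = (al^n - be^n) / (2 * sqrt 2)"
proof (induction n rule: pell.induct)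
  case 1 then show ?case by simp
next
  case 2 then show ?case by (simp add: al_def be_def)
next
  case (3 n)
  have "real (pell (Suc (Suc n))) = 2 * real (pell (Suc n)) + real (pell n)" by simp
  also have "... = (2*(al^(Suc n) - be^(Suc n)) + (al^n - be^n)) / (2 * sqrt 2)"
    using 3 by (simp add: add_divide_distrib)
  also have "... = (al^(Suc (Suc n)) - be^(Suc (Suc n))) / (2 * sqrt 2)"
    by (simp only: alrec berec) (simp add: algebra_simps)
  finally show ?case .
qed

lemma binQ: "real (pell_lucas n) = al^n + be^n"
proof (induction n rule: pell_lucas.induct)
  case 1 then show ?case by simp
next
  case 2 then show ?case by (simp add: al_def be_def)
next
  case (3 n)
  have "real (pell_lucas (Suc (Suc n))) = 2 * real (pell_lucas (Suc n)) + real (pell_lucas n)" by simp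
  also have "... = al^(Suc (Suc n)) + be^(Suc (Suc n))"
    using 3 by (simp only: alrec berec) (simp add: algebra_simps)
  finally show ?case .
qed

abbreviation Pi :: "nat \<Rightarrow> int" where "Pi n \<equiv> int (pell n)"
abbreviation Qi :: "nat \<Rightarrow> int" where "Qi n \<equiv> int (pell_lucas n)"

lemma sgn_pow: "(-1::real)^s = al^s * be^s"
proof -
  have "(al*be)^s = al^s*be^s" by (rule power_mult_distrib)
  then show ?thesis by (simp only: al_be)
qed

lemma idA: "Pi (c+2*s) + (-1)^s * Pi c = Pi (c+s) * Qi s"
proof -
  define A where "A = al^c"
  define B where "B = be^c"
  define X where "X = al^s"
  define Y where "Y = be^s"
  define w where "w = 2 * sqrt 2"
  have w: "w \<noteq> 0" unfolding w_def by simp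
  have e1: "real (pell (c+2*s)) = (A*X*X - B*Y*Y)/w"
    unfolding A_def B_def X_def Y_def w_def by (simp only: binP power_add mult_2 mult.assoc)
  have e2: "real (pell c) = (A - B)/w" unfolding A_def B_def w_def by (rule binP)
  have e3: "real (pell (c+s)) = (A*X - B*Y)/w"
    unfolding A_def B_def X_def Y_def w_def by (simp only: binP power_add)
  have e4: "real (pell_lucas s) = X + Y" unfolding X_def Y_def by (rule binQ)
  have e5: "(-1::real)^s = X*Y" unfolding X_def Y_def by (rule sgn_pow)
  have "real_of_int (Pi (c+2*s) + (-1)^s * Pi c) = (A*X*X - B*Y*Y)/w + X*Y*((A - B)/w)"
    by (simp only: of_int_add of_int_mult of_int_of_nat_eq of_int_power of_int_minus of_int_1 e1 e2 e5)
  also have "... = ((A*X - B*Y)/w) * (X+Y)"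
    using w by (simp add: field_simps)
  also have "... = real_of_int (Pi (c+s) * Qi s)"
    by (simp only: of_int_add of_int_mult of_int_of_nat_eq e3 e4)
  finally show ?thesis by (rule of_int_eq_iff[THEN iffD1])
qed

lemma idB: "Pi (c+2*s) - (-1)^s * Pi c = Qi (c+s) * Pi s"
proof -
  define A where "A = al^c"
  define B where "B = be^c"
  define X where "X = al^s"
  define Y where "Y = be^s"
  define w where "w = 2 * sqrt 2"
  have w: "w \<noteq> 0" unfolding w_def by simp
  have e1: "real (pell (c+2*s)) = (A*X*X - B*Y*Y)/w"
    unfolding A_def B_def X_def Y_def w_def by (simp only: binP power_add mult_2 mult.assoc)
  have e2: "real (pell c) = (A - B)/w" unfolding A_def B_def w_def by (rule binP)
  have e3: "real (pell_lucas (c+s)) = A*X + B*Y"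
    unfolding A_def B_def X_def Y_def by (simp only: binQ power_add)
  have e4: "real (pell s) = (X - Y)/w" unfolding X_def Y_def w_def by (rule binP)
  have e5: "(-1::real)^s = X*Y" unfolding X_def Y_def by (rule sgn_pow)
  have "real_of_int (Pi (c+2*s) - (-1)^s * Pi c) = (A*X*X - B*Y*Y)/w - X*Y*((A - B)/w)"
    by (simp only: of_int_diff of_int_mult of_int_of_nat_eq of_int_power of_int_minus of_int_1 e1 e2 e5)
  also have "... = (A*X + B*Y) * ((X - Y)/w)"
    using w by (simp add: field_simps)
  also have "... = real_of_int (Qi (c+s) * Pi s)"
    by (simp only: of_int_add of_int_mult of_int_of_nat_eq e3 e4)
  finally show ?thesis by (rule of_int_eq_iff[THEN iffD1])
qed

lemma idC: "Qi s ^ 2 - 8 * Pi s ^ 2 = 4 * (-1)^s"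
proof -
  define X where "X = al^s"
  define Y where "Y = be^s"
  define w where "w = 2 * sqrt 2"
  have w: "w \<noteq> 0" unfolding w_def by simp
  have ww: "w*w = 8" unfolding w_def by (simp add: algebra_simps)
  have e3: "real (pell_lucas s) = X + Y" unfolding X_def Y_def by (rule binQ)
  have e4: "real (pell s) = (X - Y)/w" unfolding X_def Y_def w_def by (rule binP)
  have e5: "(-1::real)^s = X*Y" unfolding X_def Y_def by (rule sgn_pow)
  have "real_of_int (Qi s ^ 2 - 8 * Pi s ^ 2) = (X+Y)^2 - 8 * ((X-Y)/w)^2 "
    by (simp only: of_int_diff of_int_mult of_int_of_nat_eq of_int_power of_int_numeral e3 e4)
  also have "... = (X+Y)^2 - (X-Y)^2" using w ww by (simp add: power_divide power2_eq_square)
  also have "... = 4 * (X*Y)" by (simp add: power2_eq_square algebra_simps)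
  also have "... = real_of_int (4 * (-1)^s)"
    by (simp only: of_int_mult of_int_power of_int_minus of_int_1 of_int_numeral e5)
  finally show ?thesis by (rule of_int_eq_iff[THEN iffD1])
qed

lemma pell_Suc_gt: "pell n < pell (Suc n)"
proof (induction n rule: pell.induct)
  case 1 then show ?case by simp
next
  case 2 then show ?case by simp
next
  case (3 n) then show ?case by simp
qed

lemma pell_strict_mono: "strict_mono pell"
  unfolding strict_mono_Suc_iff using pell_Suc_gt by blast

lemma pell_less_iff: "pell a < pell b \<longleftrightarrow> a < b"
  using pell_strict_mono strict_mono_less by blast

lemma pell_le_iff: "pell a \<le> pell b \<longleftrightarrow> a \<le> b"
  using pell_strict_mono strict_mono_less_eq by blast

lemma pell_inj: "pell a = pell b \<longleftrightarrow> a = b"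
  by (metis nat_neq_iff pell_less_iff order_less_irrefl)

lemma pell_ge: "n \<le> pell n"
proof (induction n)
  case 0 then show ?case by simp
next
  case (Suc n) then show ?case using pell_Suc_gt[of n] by simp
qed

lemma pell_pos: "0 < n \<Longrightarrow> 0 < pell n"
  using pell_ge[of n] by simp

lemma pell_dbl: "2 * pell n \<le> pell (Suc n)"
  by (cases n) simp_all

lemma pell_29: "29 * pell n \<le> pell (n + 4)"
proof -
  have "pell (n+4) = 12 * pell (Suc n) + 5 * pell n"
    by (simp add: numeral_eq_Suc)
  then show ?thesis using pell_dbl[of n] by simp
qed

lemma Q_eq: "pell_lucas (Suc n) = pell (Suc (Suc n)) + pell n"
proof (induction n rule: pell.induct)
  case 1 then show ?case by simp
next
  case 2 then show ?case by (simp add: numeral_eq_Suc)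
next
  case (3 n) then show ?case by simp
qed

lemma Q_ge2: "2 \<le> pell_lucas n"
proof (induction n rule: pell_lucas.induct)
  case 1 then show ?case by simp
next
  case 2 then show ?case by simp
next
  case (3 n) then show ?case by simp
qed

lemma Q_gt_P: "pell m < pell_lucas m"
proof (cases m)
  case 0 then show ?thesis by simp
next
  case (Suc n) then show ?thesis using Q_eq[of n] pell_Suc_gt[of "Suc n"] by simp
qed

lemma Q_le: "pell_lucas m \<le> 2 * pell (Suc m)"
proof (cases m)
  case 0 then show ?thesis by simp
next
  case (Suc n) then show ?thesis using Q_eq[of n] pell_Suc_gt[of n] pell_Suc_gt[of "Suc n"] by simp
qed

lemma pell_mod2: "pell n mod 2 = n mod 2"
proof (induction n rule: pell.induct)
  case 1 then show ?case by simp
next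
  case 2 then show ?case by simp
next
  case (3 n) then show ?case by (simp add: mod_add_eq[symmetric] mod_Suc)
qed

lemma Q_mod4: "pell_lucas n mod 4 = 2"
proof (induction n rule: pell_lucas.induct)
  case 1 then show ?case by simp
next
  case 2 then show ?case by simp
next
  case (3 n)
  have "even (pell_lucas (Suc n))" using 3 by (metis dvd_mod_iff even_numeral numeral_Bit0_eq_double dvd_triv_left)
  then obtain t where t: "pell_lucas (Suc n) = 2*t" by blast
  have "pell_lucas (Suc (Suc n)) = 4*t + pell_lucas n" using t by simp
  then show ?case using 3 by simp
qed

lemma P_double: "pell (2*s) = pell s * pell_lucas s"
proof -
  have "Pi (0+2*s) - (-1)^s * Pi 0 = Qi (0+s) * Pi s" by (rule idB)
  then have "Pi (2*s) = Pi s * Qi s" by simp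
  then show ?thesis by (metis of_nat_eq_iff of_nat_mult)
qed

lemma V2P: "0 < s \<Longrightarrow> 2^e dvd pell s \<Longrightarrow> 2^e dvd s"
proof (induction e arbitrary: s)
  case 0 then show ?case by simp
next
  case (Suc e)
  have "even (pell s)" using Suc.prems(2) by (metis dvd_mult_left power_Suc)
  then have "even s" using pell_mod2[of s] by (simp add: even_iff_mod_2_eq_zero)
  then obtain t where st: "s = 2*t" by blast
  have t0: "0 < t" using st Suc.prems(1) by simp
  obtain q where q: "pell_lucas t = 2*q" and qo: "odd q"
  proof -
    have m: "pell_lucas t mod 4 = 2" by (rule Q_mod4)
    have "pell_lucas t = 4 * (pell_lucas t div 4) + 2" using m div_mult_mod_eq[of "pell_lucas t" 4] by linarith
    then have "pell_lucas t = 2 * (2 * (pell_lucas t div 4) + 1)" by simp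
    then show ?thesis using that[of "2 * (pell_lucas t div 4) + 1"] by simp
  qed
  have "2^(Suc e) dvd pell t * 2 * q" using Suc.prems(2) st q P_double by (simp add: mult.assoc)
  then have "2^e dvd pell t * q" by (simp add: mult.commute mult.left_commute)
  moreover have "coprime (2^e) q" using qo by simp
  ultimately have "2^e dvd pell t" using coprime_dvd_mult_left_iff by blast
  then have "2^e dvd t" using Suc.IH t0 by blast
  then show ?case using st by simp
qed

lemma V2Q: "2^e dvd pell_lucas s \<Longrightarrow> e \<le> 1"
proof (rule ccontr)
  assume a: "2^e dvd pell_lucas s" "\<not> e \<le> 1"
  then have "(2::nat)^2 dvd 2^e" using le_imp_power_dvd[of 2 e 2] by simp
  then have "(4::nat) dvd 2^e" by simp
  then have "4 dvd pell_lucas s" using a(1) dvd_trans by blast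
  then show False using Q_mod4[of s] by simp
qed

fun U :: "nat \<Rightarrow> nat \<Rightarrow> int" where
  "U s 0 = 0"
| "U s (Suc 0) = 1"
| "U s (Suc (Suc j)) = Qi s * U s (Suc j) - (-1)^s * U s j"

lemma U1: "Pi (j*s) = Pi s * U s j"
proof (induction s j rule: U.induct)
  case (1 s) then show ?case by simp
next
  case (2 s) then show ?case by simp
next
  case (3 s j)
  have e: "Suc (Suc j) * s = j*s + 2*s" "Suc j * s = j*s + s" by simp_all
  have "Pi (j*s + 2*s) + (-1)^s * Pi (j*s) = Pi (j*s+s) * Qi s" by (rule idA)
  then have "Pi (Suc (Suc j) * s) = Qi s * Pi (Suc j * s) - (-1)^s * Pi (j*s)"
    unfolding e by (simp add: algebra_simps)
  also have "... = Pi s * U s (Suc (Suc j))" using 3 by (simp add: algebra_simps)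
  finally show ?case .
qed

lemma U2: "Pi s ^ 2 dvd (2^j * U s (Suc j) - int (Suc j) * Qi s ^ j)"
proof (induction j rule: less_induct)
  case (less j)
  show ?case
  proof (cases j)
    case 0 then show ?thesis by simp
  next
    case (Suc i)
    show ?thesis
    proof (cases i)
      case 0 then show ?thesis using Suc by simp
    next
      case (Suc l)
      define D where "D = (\<lambda>j. 2^j * U s (Suc j) - int (Suc j) * Qi s ^ j)"
      have j: "j = Suc (Suc l)" using Suc \<open>j = Suc i\<close> by simp
      have d1: "Pi s ^ 2 dvd D (Suc l)" unfolding D_def by (rule less.IH) (simp add: j)
      have d0: "Pi s ^ 2 dvd D l" unfolding D_def by (rule less.IH) (simp add: j)
      have c: "Qi s ^ 2 - 4 * (-1)^s = 8 * Pi s ^ 2" using idC[of s] by simp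
      have key: "D (Suc (Suc l)) = 2 * Qi s * D (Suc l) - 4 * (-1)^s * D l
                   + int (Suc l) * Qi s ^ l * (Qi s ^ 2 - 4 * (-1)^s)"
        unfolding D_def by (simp add: algebra_simps power2_eq_square)
      have "Pi s ^ 2 dvd 2 * Qi s * D (Suc l) - 4 * (-1)^s * D l
                   + int (Suc l) * Qi s ^ l * (Qi s ^ 2 - 4 * (-1)^s)"
        using d0 d1 unfolding c by (intro dvd_add dvd_diff dvd_mult) auto
      then have "Pi s ^ 2 dvd D (Suc (Suc l))" using key by simp
      then show ?thesis unfolding D_def j .
    qed
  qed
qed

lemma PQ_coprime:
  assumes p: "prime (p::nat)" "p \<noteq> 2" and d: "p dvd pell s"
  shows "\<not> p dvd pell_lucas s"
proof
  assume q: "p dvd pell_lucas s"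
  have "int p dvd Qi s ^ 2 - 8 * Pi s ^ 2"
    using d q by (intro dvd_diff dvd_mult dvd_power) (auto simp: int_dvd_int_iff power2_eq_square)
  then have "int p dvd 4 * (-1)^s" using idC[of s] by simp
  moreover have "(4::int) * (-1)^s = 4 \<or> (4::int) * (-1)^s = -4" by (cases "even s") auto
  ultimately have "int p dvd 4" by (metis dvd_minus_iff)
  then have "p dvd 4" by (metis int_dvd_int_iff of_nat_numeral)
  then have "p dvd 2^2" by simp
  then have "p dvd 2" using p(1) prime_dvd_power by blast
  then show False using p dvd_imp_le[of p 2] prime_ge_2_nat[of p] by simp
qed

lemma pow_strip:
  fixes p x y :: int
  assumes p: "prime p" and d: "p^(Suc a) dvd x*y" and n: "\<not> p^2 dvd y"
  shows "p^a dvd x"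
proof (cases "p dvd y")
  case False
  then have "coprime (p^Suc a) y" using p by (simp add: prime_imp_coprime)
  then have "p^Suc a dvd x" using d coprime_dvd_mult_left_iff by blast
  moreover have "p^a dvd p^Suc a" by (simp add: le_imp_power_dvd)
  ultimately show ?thesis using dvd_trans by blast
next
  case True
  then obtain y' where y: "y = p*y'" by blast
  have ny': "\<not> p dvd y'" using n y by (simp add: power2_eq_square)
  have "p * p^a dvd p * (x*y')" using d y by (simp add: algebra_simps)
  moreover have "p \<noteq> 0" using p by auto
  ultimately have "p^a dvd x*y'" by simp
  moreover have "coprime (p^a) y'" using ny' p by (simp add: prime_imp_coprime)
  ultimately show ?thesis using coprime_dvd_mult_left_iff by blast
qed

lemma idvd: "(int p ^ k dvd int x) = (p^k dvd x)"
  unfolding of_nat_power[symmetric] int_dvd_int_iff ..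

lemma VpP:
  fixes p r :: nat
  assumes pp: "prime p" and p2: "p \<noteq> 2" and rk: "\<And>t. p dvd pell t \<longleftrightarrow> r dvd t"
    and nsq: "\<not> p^2 dvd pell r"
  shows "0 < t \<Longrightarrow> p^(Suc e) dvd pell t \<Longrightarrow> p^e dvd t"
proof (induction e arbitrary: t)
  case 0 then show ?case by simp
next
  case (Suc e)
  have ip: "prime (int p)" using pp by simp
  have pd: "p dvd pell t" using Suc.prems(2) by (metis dvd_mult_left power_Suc)
  then have "r dvd t" using rk by blast
  then obtain j where tj: "t = j*r" by (metis dvd_def mult.commute)
  have j0: "0 < j" "0 < r" using tj Suc.prems(1) by auto
  have pr: "p dvd pell r" using rk by simp
  show ?case
  proof (cases "p dvd j")
    case False
    obtain i where ji: "j = Suc i" using j0 by (cases j) auto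
    have u: "Pi t = Pi r * U r j" using U1[of j r] tj by simp
    have "int p dvd Pi r" using pr by (simp add: int_dvd_int_iff)
    then have "int p dvd Pi r ^ 2" by (simp add: power2_eq_square)
    moreover have "Pi r ^ 2 dvd 2^i * U r j - int j * Qi r ^ i" using U2[of r i] ji by simp
    ultimately have a: "int p dvd 2^i * U r j - int j * Qi r ^ i" by (rule dvd_trans)
    have nU: "\<not> int p dvd U r j"
    proof
      assume "int p dvd U r j"
      then have "int p dvd 2^i * U r j" by simp
      then have "int p dvd int j * Qi r ^ i" using a dvd_diff_right_iff by blast
      then have "int p dvd int j \<or> int p dvd Qi r ^ i" using ip prime_dvd_mult_iff by blast
      then have "int p dvd int j \<or> int p dvd Qi r" using ip prime_dvd_power by blast
      then show False using False PQ_coprime[OF pp p2 pr] by (simp add: int_dvd_int_iff)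
    qed
    have "int p ^ 2 dvd Pi t"
    proof -
      have "p^2 dvd p^(Suc (Suc e))" by (rule le_imp_power_dvd) simp
      then have "p^2 dvd pell t" using Suc.prems(2) dvd_trans by blast
      then show ?thesis using idvd by blast
    qed
    then have "int p ^ 2 dvd Pi r * U r j" using u by simp
    moreover have "coprime (int p ^ 2) (U r j)" using nU ip by (simp add: prime_imp_coprime)
    ultimately have "int p ^ 2 dvd Pi r" using coprime_dvd_mult_left_iff by blast
    then have "p^2 dvd pell r" using idvd by blast
    then show ?thesis using nsq by blast
  next
    case True
    then obtain j' where jj: "j = p * j'" by blast
    define t' where "t' = j' * r"
    have tt: "t = p * t'" using tj jj t'_def by simp
    have t'0: "0 < t'" using tt Suc.prems(1) by simp
    have pt': "p dvd pell t'" using rk t'_def by simp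
    have u: "Pi t = Pi t' * U t' p" using U1[of p t'] tt by (simp add: mult.commute)
    obtain i where pi: "p = Suc i" using pp by (cases p) auto
    have "int p ^ 2 dvd Pi t' ^ 2" using pt' by (simp add: int_dvd_int_iff)
    moreover have "Pi t' ^ 2 dvd 2^i * U t' p - int p * Qi t' ^ i" using U2[of t' i] pi by simp
    ultimately have a: "int p ^ 2 dvd 2^i * U t' p - int p * Qi t' ^ i" by (rule dvd_trans)
    have nU: "\<not> int p ^ 2 dvd U t' p"
    proof
      assume "int p ^ 2 dvd U t' p"
      then have "int p ^ 2 dvd 2^i * U t' p" by simp
      then have "int p ^ 2 dvd int p * Qi t' ^ i" using a dvd_diff_right_iff by blast
      then have "int p * int p dvd int p * Qi t' ^ i" by (simp add: power2_eq_square)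
      moreover have "int p \<noteq> 0" using ip by auto
      ultimately have "int p dvd Qi t' ^ i" by simp
      then have "int p dvd Qi t'" using ip prime_dvd_power by blast
      then show False using PQ_coprime[OF pp p2 pt'] by (simp add: int_dvd_int_iff)
    qed
    have "int p ^ Suc (Suc e) dvd Pi t" using Suc.prems(2) idvd by blast
    then have "int p ^ Suc (Suc e) dvd Pi t' * U t' p" using u by simp
    then have "int p ^ Suc e dvd Pi t'" using pow_strip[OF ip _ nU] by blast
    then have "p ^ Suc e dvd pell t'" using idvd by blast
    then have "p^e dvd t'" using Suc.IH t'0 by blast
    then show ?thesis using tt by simp
  qed
qed

lemma pv0: "pell 0 = 0" by simp
lemma qv0: "pell_lucas 0 = 2" by simp
lemma pv1: "pell 1 = 1" by simp
lemma pv2: "pell 2 = 2" by (simp add: numeral_2_eq_2)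
lemma pv3: "pell 3 = 5" by (simp add: numeral_3_eq_3)
lemma pv4: "pell 4 = 12" using pell.simps(3)[of 2] pv3 pv2 by simp
lemma pv5: "pell 5 = 29" using pell.simps(3)[of 3] pv4 pv3 by simp
lemma pv6: "pell 6 = 70" using pell.simps(3)[of 4] pv5 pv4 by simp
lemma pv7: "pell 7 = 169" using pell.simps(3)[of 5] pv6 pv5 by simp
lemma pv8: "pell 8 = 408" using pell.simps(3)[of 6] pv7 pv6 by simp
lemma pv9: "pell 9 = 985" using pell.simps(3)[of 7] pv8 pv7 by simp
lemma pv10: "pell 10 = 2378" using pell.simps(3)[of 8] pv9 pv8 by simp
lemma pv11: "pell 11 = 5741" using pell.simps(3)[of 9] pv10 pv9 by simp
lemma pv12: "pell 12 = 13860" using pell.simps(3)[of 10] pv11 pv10 by simp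
lemma pv13: "pell 13 = 33461" using pell.simps(3)[of 11] pv12 pv11 by simp
lemma pv14: "pell 14 = 80782" using pell.simps(3)[of 12] pv13 pv12 by simp
lemma pv15: "pell 15 = 195025" using pell.simps(3)[of 13] pv14 pv13 by simp
lemma pv16: "pell 16 = 470832" using pell.simps(3)[of 14] pv15 pv14 by simp
lemma pv17: "pell 17 = 1136689" using pell.simps(3)[of 15] pv16 pv15 by simp
lemma pv18: "pell 18 = 2744210" using pell.simps(3)[of 16] pv17 pv16 by simp
lemma pv19: "pell 19 = 6625109" using pell.simps(3)[of 17] pv18 pv17 by simp
lemma pv20: "pell 20 = 15994428" using pell.simps(3)[of 18] pv19 pv18 by simp
lemma pv21: "pell 21 = 38613965" using pell.simps(3)[of 19] pv20 pv19 by simp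
lemma pv22: "pell 22 = 93222358" using pell.simps(3)[of 20] pv21 pv20 by simp
lemma pv23: "pell 23 = 225058681" using pell.simps(3)[of 21] pv22 pv21 by simp
lemma pv24: "pell 24 = 543339720" using pell.simps(3)[of 22] pv23 pv22 by simp
lemma pv25: "pell 25 = 1311738121" using pell.simps(3)[of 23] pv24 pv23 by simp
lemma pv26: "pell 26 = 3166815962" using pell.simps(3)[of 24] pv25 pv24 by simp
lemma pv27: "pell 27 = 7645370045" using pell.simps(3)[of 25] pv26 pv25 by simp
lemma pv28: "pell 28 = 18457556052" using pell.simps(3)[of 26] pv27 pv26 by simp
lemma pv29: "pell 29 = 44560482149" using pell.simps(3)[of 27] pv28 pv27 by simp
lemma pv30: "pell 30 = 107578520350" using pell.simps(3)[of 28] pv29 pv28 by simp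
lemma pv31: "pell 31 = 259717522849" using pell.simps(3)[of 29] pv30 pv29 by simp
lemma pv32: "pell 32 = 627013566048" using pell.simps(3)[of 30] pv31 pv30 by simp
lemma pv33: "pell 33 = 1513744654945" using pell.simps(3)[of 31] pv32 pv31 by simp
lemma pv34: "pell 34 = 3654502875938" using pell.simps(3)[of 32] pv33 pv32 by simp
lemma pv35: "pell 35 = 8822750406821" using pell.simps(3)[of 33] pv34 pv33 by simp
lemma pv36: "pell 36 = 21300003689580" using pell.simps(3)[of 34] pv35 pv34 by simp
lemma pv37: "pell 37 = 51422757785981" using pell.simps(3)[of 35] pv36 pv35 by simp
lemma pv38: "pell 38 = 124145519261542" using pell.simps(3)[of 36] pv37 pv36 by simp
lemma pv39: "pell 39 = 299713796309065" using pell.simps(3)[of 37] pv38 pv37 by simp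
lemma pv40: "pell 40 = 723573111879672" using pell.simps(3)[of 38] pv39 pv38 by simp
lemma qv1: "pell_lucas 1 = 2" by simp
lemma qv2: "pell_lucas 2 = 6" by (simp add: numeral_2_eq_2)
lemma qv3: "pell_lucas 3 = 14" by (simp add: numeral_3_eq_3)
lemma qv4: "pell_lucas 4 = 34" using pell_lucas.simps(3)[of 2] qv3 qv2 by simp
lemma qv5: "pell_lucas 5 = 82" using pell_lucas.simps(3)[of 3] qv4 qv3 by simp
lemma qv6: "pell_lucas 6 = 198" using pell_lucas.simps(3)[of 4] qv5 qv4 by simp
lemma qv7: "pell_lucas 7 = 478" using pell_lucas.simps(3)[of 5] qv6 qv5 by simp
lemma qv8: "pell_lucas 8 = 1154" using pell_lucas.simps(3)[of 6] qv7 qv6 by simp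
lemma qv9: "pell_lucas 9 = 2786" using pell_lucas.simps(3)[of 7] qv8 qv7 by simp
lemma qv10: "pell_lucas 10 = 6726" using pell_lucas.simps(3)[of 8] qv9 qv8 by simp
lemma qv11: "pell_lucas 11 = 16238" using pell_lucas.simps(3)[of 9] qv10 qv9 by simp
lemma qv12: "pell_lucas 12 = 39202" using pell_lucas.simps(3)[of 10] qv11 qv10 by simp
lemma qv13: "pell_lucas 13 = 94642" using pell_lucas.simps(3)[of 11] qv12 qv11 by simp
lemma qv14: "pell_lucas 14 = 228486" using pell_lucas.simps(3)[of 12] qv13 qv12 by simp
lemma qv15: "pell_lucas 15 = 551614" using pell_lucas.simps(3)[of 13] qv14 qv13 by simp
lemma qv16: "pell_lucas 16 = 1331714" using pell_lucas.simps(3)[of 14] qv15 qv14 by simp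
lemma qv17: "pell_lucas 17 = 3215042" using pell_lucas.simps(3)[of 15] qv16 qv15 by simp
lemma qv18: "pell_lucas 18 = 7761798" using pell_lucas.simps(3)[of 16] qv17 qv16 by simp
lemma qv19: "pell_lucas 19 = 18738638" using pell_lucas.simps(3)[of 17] qv18 qv17 by simp
lemma qv20: "pell_lucas 20 = 45239074" using pell_lucas.simps(3)[of 18] qv19 qv18 by simp

lemma per1:
  assumes a: "pell q mod p = 0" "pell (Suc q) mod p = 1 mod p"
  shows "pell (t + q) mod p = pell t mod p"
proof (induction t rule: pell.induct)
  case 1 then show ?case using a by simp
next
  case 2 then show ?case using a by simp
next
  case (3 n)
  have e: "pell (Suc (Suc n) + q) = 2 * pell (Suc n + q) + pell (n + q)" by simp
  have h1: "pell (Suc n + q) mod p = pell (Suc n) mod p" using 3(1) .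
  have h2: "pell (n + q) mod p = pell n mod p" using 3(2) .
  have "(2 * pell (Suc n + q) + pell (n + q)) mod p = (2 * pell (Suc n) + pell n) mod p"
    by (intro mod_add_cong mod_mult_cong h1 h2 refl)
  then show ?case using e by simp
qed

lemma per2:
  assumes a: "pell q mod p = 0" "pell (Suc q) mod p = 1 mod p" and q: "0 < q"
  shows "pell t mod p = pell (t mod q) mod p"
proof (induction t rule: less_induct)
  case (less t)
  show ?case
  proof (cases "t < q")
    case True then show ?thesis by simp
  next
    case False
    define u where "u = t - q"
    have t: "t = u + q" using False u_def by simp
    have ut: "u < t" using q t by simp
    have "pell t mod p = pell u mod p" using per1[OF a, of u] t by simp
    also have "... = pell (u mod q) mod p" using less.IH[OF ut] .
    also have "u mod q = t mod q" using t by simp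
    finally show ?thesis .
  qed
qed

lemma rank3_aux: "x < 8 \<Longrightarrow> (pell x mod 3 = 0) = (x mod 4 = 0)"
proof -
  assume "x < 8"
  then have "x = 0 \<or> x = 1 \<or> x = 2 \<or> x = 3 \<or> x = 4 \<or> x = 5 \<or> x = 6 \<or> x = 7" by presburger
  then show ?thesis by (elim disjE) (simp_all add: pv0 pv1 pv2 pv3 pv4 pv5 pv6 pv7)
qed

lemma rank3: "3 dvd pell t \<longleftrightarrow> 4 dvd t"
proof -
  have m: "pell t mod 3 = pell (t mod 8) mod 3" by (rule per2) (simp_all add: pv8 pv9)
  have "3 dvd pell t \<longleftrightarrow> pell (t mod 8) mod 3 = 0" using m by (simp only: dvd_eq_mod_eq_0)
  also have "... \<longleftrightarrow> (t mod 8) mod 4 = 0" by (rule rank3_aux) simp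
  also have "... \<longleftrightarrow> 4 dvd t" by presburger
  finally show ?thesis .
qed

lemma rank5_aux: "x < 12 \<Longrightarrow> (pell x mod 5 = 0) = (x mod 3 = 0)"
proof -
  assume "x < 12"
  then have "x = 0 \<or> x = 1 \<or> x = 2 \<or> x = 3 \<or> x = 4 \<or> x = 5 \<or> x = 6 \<or> x = 7 \<or> x = 8 \<or> x = 9 \<or> x = 10 \<or> x = 11" by presburger
  then show ?thesis by (elim disjE) (simp_all add: pv0 pv1 pv2 pv3 pv4 pv5 pv6 pv7 pv8 pv9 pv10 pv11)
qed

lemma rank5: "5 dvd pell t \<longleftrightarrow> 3 dvd t"
proof -
  have m: "pell t mod 5 = pell (t mod 12) mod 5" by (rule per2) (simp_all add: pv12 pv13)
  have "5 dvd pell t \<longleftrightarrow> pell (t mod 12) mod 5 = 0" using m by (simp only: dvd_eq_mod_eq_0)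
  also have "... \<longleftrightarrow> (t mod 12) mod 3 = 0" by (rule rank5_aux) simp
  also have "... \<longleftrightarrow> 3 dvd t" by presburger
  finally show ?thesis .
qed

lemma rank7_aux: "x < 6 \<Longrightarrow> (pell x mod 7 = 0) = (x mod 6 = 0)"
proof -
  assume "x < 6"
  then have "x = 0 \<or> x = 1 \<or> x = 2 \<or> x = 3 \<or> x = 4 \<or> x = 5" by presburger
  then show ?thesis by (elim disjE) (simp_all add: pv0 pv1 pv2 pv3 pv4 pv5)
qed

lemma rank7: "7 dvd pell t \<longleftrightarrow> 6 dvd t"
proof -
  have m: "pell t mod 7 = pell (t mod 6) mod 7" by (rule per2) (simp_all add: pv6 pv7)
  have "7 dvd pell t \<longleftrightarrow> pell (t mod 6) mod 7 = 0" using m by (simp only: dvd_eq_mod_eq_0)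
  also have "... \<longleftrightarrow> (t mod 6) mod 6 = 0" by (rule rank7_aux) simp
  also have "... \<longleftrightarrow> 6 dvd t" by presburger
  finally show ?thesis .
qed

lemma V3P: "0 < t \<Longrightarrow> 3^(Suc e) dvd pell t \<Longrightarrow> 3^e dvd t"
  by (rule VpP[of 3 4]) (simp_all add: rank3 pv4)
lemma V5P: "0 < t \<Longrightarrow> 5^(Suc e) dvd pell t \<Longrightarrow> 5^e dvd t"
  by (rule VpP[of 5 3]) (simp_all add: rank5 pv3)
lemma V7P: "0 < t \<Longrightarrow> 7^(Suc e) dvd pell t \<Longrightarrow> 7^e dvd t"
  by (rule VpP[of 7 6]) (simp_all add: rank7 pv6)

lemma BP2: "0 < s \<Longrightarrow> 2^e dvd pell s \<Longrightarrow> 2^e \<le> s"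
  using V2P dvd_imp_le by blast

lemma BPo: assumes p: "p = 3 \<or> p = 5 \<or> p = (7::nat)" and s: "0 < s" and d: "p^e dvd pell s"
  shows "p^e \<le> p * s"
proof (cases e)
  case 0 then show ?thesis using p s by auto
next
  case (Suc e')
  have d': "p^Suc e' dvd pell s" using d Suc by simp
  have "p^e' dvd s" using p
  proof (elim disjE)
    assume "p = 3" then show ?thesis using V3P[OF s] d' by simp
  next
    assume "p = 5" then show ?thesis using V5P[OF s] d' by simp
  next
    assume "p = 7" then show ?thesis using V7P[OF s] d' by simp
  qed
  then have "p^e' \<le> s" using s dvd_imp_le by blast
  then show ?thesis using Suc by simp
qed

lemma BQ2: "2^e dvd pell_lucas s \<Longrightarrow> (2::nat)^e \<le> 2"
proof -
  assume "2^e dvd pell_lucas s"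
  then have "e \<le> 1" by (rule V2Q)
  then show ?thesis by (cases e) auto
qed

lemma BQo: assumes p: "p = 3 \<or> p = 5 \<or> p = (7::nat)" and s: "0 < s" and d: "p^e dvd pell_lucas s"
  shows "p^e \<le> 2 * p * s"
proof -
  have "p^e dvd pell (2*s)" unfolding P_double using d by (rule dvd_mult)
  then have "p^e \<le> p * (2*s)" using BPo[OF p] s by simp
  then show ?thesis by simp
qed

lemma split_dvd:
  fixes p x y :: nat
  assumes p: "prime p" and x: "0 < x" and y: "0 < y" and d: "p^e dvd x*y"
  shows "\<exists>e1 e2. e \<le> e1 + e2 \<and> p^e1 dvd x \<and> p^e2 dvd y"
proof -
  have nu: "\<not> is_unit p" using p by auto
  have "e \<le> multiplicity p (x*y)" using d x y nu by (intro multiplicity_geI) auto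
  also have "... = multiplicity p x + multiplicity p y"
    using p x y by (intro prime_elem_multiplicity_mult_distrib) auto
  finally show ?thesis using multiplicity_dvd by blast
qed

lemma PQ_upper: "pell k * pell_lucas m \<le> 2 * pell (k+m)"
proof (cases "m \<le> k")
  case True
  have "Pi ((k-m) + 2*m) + (-1)^m * Pi (k-m) = Pi ((k-m)+m) * Qi m" by (rule idA)
  then have e: "Pi k * Qi m = Pi (k+m) + (-1)^m * Pi (k-m)" using True by (simp add: add.commute)
  have "(-1)^m * Pi (k-m) \<le> Pi (k-m)" by (cases "even m") auto
  also have "Pi (k-m) \<le> Pi (k+m)" using pell_le_iff[of "k-m" "k+m"] by simp
  finally have "Pi k * Qi m \<le> 2 * Pi (k+m)" using e by simp
  then show ?thesis by (metis of_nat_le_iff of_nat_mult of_nat_numeral)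
next
  case False
  have "Pi ((m-k) + 2*k) - (-1)^k * Pi (m-k) = Qi ((m-k)+k) * Pi k" by (rule idB)
  then have e: "Pi k * Qi m = Pi (k+m) - (-1)^k * Pi (m-k)" using False by (simp add: algebra_simps)
  have "- ((-1)^k * Pi (m-k)) \<le> Pi (m-k)" by (cases "even k") auto
  also have "Pi (m-k) \<le> Pi (k+m)" using pell_le_iff[of "m-k" "k+m"] by simp
  finally have "Pi k * Qi m \<le> 2 * Pi (k+m)" using e by simp
  then show ?thesis by (metis of_nat_le_iff of_nat_mult of_nat_numeral)
qed

lemma r_ident: "\<exists>sg. (sg = 1 \<or> sg = -1) \<and>
   Pi (r+m) = Pi r * Qi m + sg * Pi (if m \<le> r then r - m else m - r)"
proof (cases "m \<le> r")
  case True
  have "Pi ((r-m) + 2*m) + (-1)^m * Pi (r-m) = Pi ((r-m)+m) * Qi m" by (rule idA)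
  moreover have "(r-m) + 2*m = r+m" "(r-m)+m = r" using True by simp_all
  ultimately have e: "Pi (r+m) = Pi r * Qi m + (-((-1)^m)) * Pi (r-m)" by simp
  have s: "-((-1::int)^m) = 1 \<or> -((-1::int)^m) = -1" by (cases "even m") auto
  show ?thesis
    apply (rule exI[of _ "-((-1)^m)"])
    using e s True by simp
next
  case False
  have "Pi ((m-r) + 2*r) - (-1)^r * Pi (m-r) = Qi ((m-r)+r) * Pi r" by (rule idB)
  moreover have "(m-r) + 2*r = r+m" "(m-r)+r = m" using False by simp_all
  ultimately have e: "Pi (r+m) = Pi r * Qi m + (-1)^r * Pi (m-r)" by (simp add: algebra_simps)
  have s: "(-1::int)^r = 1 \<or> (-1::int)^r = -1" by (cases "even r") auto
  show ?thesis
    apply (rule exI[of _ "(-1)^r"])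
    using e s False by simp
qed

lemma diff_fact: "\<exists>a c. 0 < a \<and> 0 < c \<and> a \<le> k + h \<and> c \<le> k + h \<and> a * c \<le> (k+h) * h \<and>
   pell (k + 2*h) - pell k = pell a * pell_lucas c" if "0 < h"
proof (cases "even h")
  case True
  have "Pi (k + 2*h) - (-1)^h * Pi k = Qi (k+h) * Pi h" by (rule idB)
  then have "Pi (k + 2*h) - Pi k = Pi h * Qi (k+h)" using True by simp
  moreover have "pell k \<le> pell (k+2*h)" using pell_le_iff by simp
  ultimately have "int (pell (k + 2*h) - pell k) = int (pell h * pell_lucas (k+h))" by (simp add: of_nat_diff)
  then have "pell (k + 2*h) - pell k = pell h * pell_lucas (k+h)" by (simp only: of_nat_eq_iff)
  then show ?thesis using that by (intro exI[of _ h] exI[of _ "k+h"]) (auto simp: mult.commute)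
next
  case False
  have "Pi (k + 2*h) + (-1)^h * Pi k = Pi (k+h) * Qi h" by (rule idA)
  then have "Pi (k + 2*h) - Pi k = Pi (k+h) * Qi h" using False by simp
  moreover have "pell k \<le> pell (k+2*h)" using pell_le_iff by simp
  ultimately have "int (pell (k + 2*h) - pell k) = int (pell (k+h) * pell_lucas h)" by (simp add: of_nat_diff)
  then have "pell (k + 2*h) - pell k = pell (k+h) * pell_lucas h" by (simp only: of_nat_eq_iff)
  then show ?thesis using that by (intro exI[of _ "k+h"] exI[of _ h]) auto
qed

lemma main_struct:
  fixes b d n m k :: nat
  assumes b: "2 \<le> b" "b \<le> 10"
    and eq: "pell n = b^d * pell_lucas m + pell k"
    and dk0: "k = 0 \<Longrightarrow> d = 1"
    and dk1: "0 < k \<Longrightarrow> pell k < b^d \<and> b^d \<le> b * pell k"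
  shows "m \<le> 2*k+4 \<and> (0 < k \<longrightarrow>
     (\<forall>e. 2^e dvd b^d \<longrightarrow> 2^e \<le> 3*k+6) \<and>
     (\<forall>p e. (p = 3 \<or> p = 5 \<or> p = 7) \<longrightarrow> p^e dvd b^d \<longrightarrow> 2*p^e \<le> p^2 * ((3*k+6)*(k+6))))"
proof -
  define B where "B = b^d"
  define Qm where "Qm = pell_lucas m"
  have eqB: "pell n = B * Qm + pell k" using eq B_def Qm_def by simp
  have Qm2: "2 \<le> Qm" unfolding Qm_def by (rule Q_ge2)
  have B2: "2 \<le> B"
  proof (cases "k = 0")
    case True then show ?thesis using dk0 b B_def by simp
  next
    case False
    then have "pell k < B" using dk1 B_def by simp
    moreover have "1 \<le> pell k" using pell_pos False by (simp add: Suc_le_eq)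
    ultimately show ?thesis by simp
  qed
  have "pell m < Qm" unfolding Qm_def by (rule Q_gt_P)
  also have "Qm \<le> B * Qm" using B2 by simp
  also have "... \<le> pell n" using eqB by simp
  finally have "m < n" using pell_less_iff by blast
  define r where "r = n - m"
  have nrm: "n = r + m" using \<open>m < n\<close> r_def by simp
  have r0: "0 < r" using \<open>m < n\<close> r_def by simp
  have rup: "r \<le> k + 4 \<and> (0 < k \<longrightarrow> r \<le> k + 3)"
  proof (cases "k = 0")
    case True
    have "pell n = b * Qm" using eqB True dk0 B_def by simp
    also have "... \<le> 10 * Qm" using b by simp
    also have "... \<le> 20 * pell (Suc m)" using Q_le[of m] Qm_def by simp
    also have "... < 29 * pell (Suc m)" using pell_pos[of "Suc m"] by simp
    also have "... \<le> pell (Suc m + 4)" by (rule pell_29)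
    finally have "n < Suc m + 4" using pell_less_iff by blast
    then show ?thesis using nrm True by simp
  next
    case False
    have le1: "B \<le> b * pell k" using dk1 False B_def by simp
    have "pell n = B * Qm + pell k" by (rule eqB)
    also have "... \<le> b * pell k * Qm + pell k * Qm" using le1 Qm2 by (intro add_mono mult_right_mono) auto
    also have "... = (b+1) * (pell k * Qm)" by (simp add: algebra_simps)
    also have "... \<le> 11 * (pell k * Qm)" using b by (intro mult_right_mono) auto
    also have "... \<le> 11 * (2 * pell (k+m))" using PQ_upper[of k m] Qm_def by simp
    also have "... < 29 * pell (k+m)" using pell_pos[of "k+m"] False by simp
    also have "... \<le> pell (k+m+4)" by (rule pell_29)
    finally have "n < k+m+4" using pell_less_iff by blast
    then show ?thesis using nrm by simp
  qed
  define j where "j = (if m \<le> r then r - m else m - r)"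
  obtain sg where sg: "sg = 1 \<or> sg = -1" and ri: "Pi n = Pi r * Qi m + sg * Pi j"
    using r_ident[of r m] nrm j_def by auto
  have key: "(Pi r - int B) * int Qm = Pi k - sg * Pi j"
    using ri eqB Qm_def by (simp add: algebra_simps)
  show ?thesis
  proof (cases "pell r = B")
    case True
    have "Pi k = sg * Pi j" using key True by simp
    then have "pell k = pell j" using sg by auto
    then have kj: "k = j" using pell_inj by blast
    have mb: "m \<le> 2*k+4" using kj j_def rup by (cases "m \<le> r") auto
    have vals: "0 < k \<longrightarrow>
     (\<forall>e. 2^e dvd b^d \<longrightarrow> 2^e \<le> 3*k+6) \<and>
     (\<forall>p e. (p = 3 \<or> p = 5 \<or> p = 7) \<longrightarrow> p^e dvd b^d \<longrightarrow> 2*p^e \<le> p^2 * ((3*k+6)*(k+6)))"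
    proof (intro impI conjI allI)
      assume k0: "0 < k"
      have rk: "r \<le> k+3" using rup k0 by simp
      fix e assume "2^e dvd b^d"
      then have "2^e dvd pell r" using True B_def by simp
      then have "2^e \<le> r" using BP2 r0 by blast
      then show "2^e \<le> 3*k+6" using rk by simp
    next
      assume k0: "0 < k"
      have rk: "r \<le> k+3" using rup k0 by simp
      fix p e :: nat assume p: "p = 3 \<or> p = 5 \<or> p = 7" and d: "p^e dvd b^d"
      then have "p^e dvd pell r" using True B_def by simp
      then have "p^e \<le> p * r" using BPo[OF p r0] by blast
      also have "... \<le> p * (k+3)" using rk by simp
      finally have a: "2 * p^e \<le> 2 * p * (k+3)" by simp
      have "2 * (k+3) \<le> p * ((3*k+6)*(k+6))"
      proof -
        have "2 * (k+3) \<le> 1 * ((3*k+6)*(k+6))" by (simp add: algebra_simps)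
        also have "... \<le> p * ((3*k+6)*(k+6))" using p by (intro mult_right_mono) auto
        finally show ?thesis .
      qed
      then have "p * (2 * (k+3)) \<le> p * (p * ((3*k+6)*(k+6)))" by (rule mult_left_mono) simp
      then show "2 * p^e \<le> p^2 * ((3*k+6)*(k+6))" using a by (simp add: power2_eq_square algebra_simps)
    qed
    show ?thesis using mb vals by blast
  next
    case False
    have ne: "Pi r - int B \<noteq> 0" using False by simp
    have a1: "1 \<le> \<bar>Pi r - int B\<bar>" using ne by linarith
    have "int Qm = 1 * int Qm" by simp
    also have "... \<le> \<bar>Pi r - int B\<bar> * int Qm" using a1 by (intro mult_right_mono) auto
    also have "... = \<bar>Pi k - sg * Pi j\<bar>" using key by (metis abs_mult abs_of_nat)
    also have "... \<le> Pi k + Pi j" using sg by auto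
    finally have qle: "Qm \<le> pell k + pell j" by simp
    have mk: "m \<le> k + 4 \<and> (0 < k \<longrightarrow> m \<le> k + 3)"
    proof (cases "m \<le> r")
      case True then show ?thesis using rup by auto
    next
      case False
      obtain m' where m': "m = Suc m'" using False by (cases m) auto
      have "j = m - r" using False j_def by simp
      then have "j \<le> m'" using m' r0 by simp
      then have "pell j \<le> pell m'" using pell_le_iff by blast
      moreover have "Qm = pell (Suc (Suc m')) + pell m'" using Q_eq[of m'] Qm_def m' by simp
      ultimately have "pell (Suc m) \<le> pell k" using qle m' by simp
      then have "Suc m \<le> k" using pell_le_iff by blast
      then show ?thesis by simp
    qed
    have vals: "0 < k \<longrightarrow>
     (\<forall>e. 2^e dvd b^d \<longrightarrow> 2^e \<le> 3*k+6) \<and>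
     (\<forall>p e. (p = 3 \<or> p = 5 \<or> p = 7) \<longrightarrow> p^e dvd b^d \<longrightarrow> 2*p^e \<le> p^2 * ((3*k+6)*(k+6)))"
    proof (intro impI)
      assume k0: "0 < k"
      have nle: "n \<le> 2*k+6" using nrm rup mk k0 by simp
      have "pell k < pell n" using eqB Qm2 B2 by (simp add: less_le_trans[of 0 4] mult_le_mono)
      then have kn: "k < n" using pell_less_iff by blast
      have "Qm mod 4 = 2" using Q_mod4[of m] Qm_def by simp
      then have "even Qm" by presburger
      then obtain t where t: "B * Qm = 2 * t" by (metis dvd_mult dvd_def)
      have "pell n mod 2 = pell k mod 2" using eqB t by simp
      then have nk2: "n mod 2 = k mod 2" using pell_mod2[of n] pell_mod2[of k] by simp
      define h where "h = (n - k) div 2"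
      have nh: "n = k + 2*h" using nk2 kn h_def by presburger
      have h0: "0 < h" using nh kn by simp
      have h6: "2*h \<le> k+6" using nh nle by simp
      obtain a c where ac: "0 < a" "0 < c" "a \<le> k+h" "c \<le> k+h" "a*c \<le> (k+h)*h"
        and fac: "pell (k + 2*h) - pell k = pell a * pell_lucas c"
        using diff_fact[OF h0, of k] by blast
      have "B * Qm = pell a * pell_lucas c" using fac nh eqB by simp
      then have Bd: "B dvd pell a * pell_lucas c" by (metis dvd_triv_left)
      have pa: "0 < pell a" using pell_pos ac by blast
      have qc: "0 < pell_lucas c" using Q_ge2[of c] by simp
      show "(\<forall>e. 2^e dvd b^d \<longrightarrow> 2^e \<le> 3*k+6) \<and>
     (\<forall>p e. (p = 3 \<or> p = 5 \<or> p = 7) \<longrightarrow> p^e dvd b^d \<longrightarrow> 2*p^e \<le> p^2 * ((3*k+6)*(k+6)))"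
      proof (intro conjI allI impI)
        fix e :: nat assume "2^e dvd b^d"
        then have "2^e dvd pell a * pell_lucas c" using Bd B_def dvd_trans by blast
        then obtain e1 e2 where ee: "e \<le> e1 + e2" "2^e1 dvd pell a" "2^e2 dvd pell_lucas c"
          using split_dvd[of 2 "pell a" "pell_lucas c" e] pa qc by auto
        have "2^e1 \<le> a" using BP2 ac(1) ee(2) by blast
        moreover have "(2::nat)^e2 \<le> 2" using BQ2 ee(3) by blast
        ultimately have "2^e1 * 2^e2 \<le> a * (2::nat)" by (rule mult_le_mono)
        moreover have "(2::nat)^e \<le> 2^(e1+e2)" using ee(1) by (simp add: power_increasing)
        ultimately have "2^e \<le> a * 2" by (simp add: power_add)
        then show "2^e \<le> 3*k+6" using ac(3) h6 by simp
      next
        fix p e :: nat assume p: "p = 3 \<or> p = 5 \<or> p = 7" and "p^e dvd b^d"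
        then have "p^e dvd pell a * pell_lucas c" using Bd B_def dvd_trans by blast
        moreover have pp: "prime p" using p by auto
        ultimately obtain e1 e2 where ee: "e \<le> e1 + e2" "p^e1 dvd pell a" "p^e2 dvd pell_lucas c"
          using split_dvd[of p "pell a" "pell_lucas c" e] pa qc by auto
        have "p^e1 \<le> p * a" using BPo[OF p ac(1) ee(2)] .
        moreover have "p^e2 \<le> 2 * p * c" using BQo[OF p ac(2) ee(3)] .
        ultimately have "p^e1 * p^e2 \<le> (p * a) * (2 * p * c)" by (rule mult_le_mono)
        moreover have "p^e \<le> p^(e1+e2)" using ee(1) p by (intro power_increasing) auto
        ultimately have "p^e \<le> (p * a) * (2 * p * c)" by (simp add: power_add)
        also have "... = 2 * p^2 * (a*c)" by (simp add: power2_eq_square algebra_simps)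
        also have "... \<le> 2 * p^2 * ((k+h)*h)" using ac(5) by simp
        finally have "2 * p^e \<le> p^2 * (4*((k+h)*h))" by (simp add: algebra_simps)
        also have "4*((k+h)*h) = (2*k+2*h)*(2*h)" by (simp add: algebra_simps)
        also have "(2*k+2*h)*(2*h) \<le> (3*k+6)*(k+6)" using h6 by (intro mult_le_mono) auto
        finally show "2*p^e \<le> p^2 * ((3*k+6)*(k+6))" by simp
      qed
    qed
    show ?thesis using mk vals by simp
  qed
qed

lemma gstep: "17 \<le> n \<Longrightarrow> 25*(3*Suc n+6)*((3*Suc n+6)*(Suc n+6)) \<le> 2 * (25*(3*n+6)*((3*n+6)*(n+6)))"
proof -
  assume "17 \<le> n"
  then obtain j where j: "n = j + 17" by (metis add.commute le_iff_add)
  show ?thesis unfolding j by (simp add: algebra_simps)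
qed

lemma growth: "17 \<le> k \<Longrightarrow> 25*(3*k+6)*((3*k+6)*(k+6)) \<le> 2 * pell k"
proof (induction k rule: dec_induct)
  case base then show ?case by (simp add: pv17)
next
  case (step n)
  have "25*(3*Suc n+6)*((3*Suc n+6)*(Suc n+6)) \<le> 2 * (25*(3*n+6)*((3*n+6)*(n+6)))"
    using gstep step(1) by blast
  also have "... \<le> 2 * (2 * pell n)" using step(3) by (rule mult_le_mono2)
  also have "... \<le> 2 * pell (Suc n)" using pell_dbl[of n] by simp
  finally show ?case .
qed

lemma kbound:
  fixes b d k :: nat
  assumes b: "2 \<le> b" "b \<le> 10" and k0: "0 < k" and lt: "pell k < b^d"
    and v2: "\<forall>e. 2^e dvd b^d \<longrightarrow> 2^e \<le> 3*k+6"
    and vp: "\<forall>p e. (p = 3 \<or> p = 5 \<or> p = 7) \<longrightarrow> p^e dvd b^d \<longrightarrow> 2*p^e \<le> p^2 * ((3*k+6)*(k+6))"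
  shows "k \<le> 16"
proof -
  define T where "T = (3*k+6)*(k+6)"
  have T1: "1 \<le> T" unfolding T_def by simp
  have vp': "\<And>p e. p = 3 \<or> p = 5 \<or> p = 7 \<Longrightarrow> p^e dvd b^d \<Longrightarrow> 2*p^e \<le> p^2 * T"
    using vp T_def by blast
  have v2': "\<And>e. 2^e dvd b^d \<Longrightarrow> 2^e \<le> 3*k+6" using v2 by blast
  have "25*(3*k+6)*1 \<le> 25*(3*k+6)*T" by (rule mult_le_mono2[OF T1])
  then have c1: "2 * (3*k+6) \<le> 25*(3*k+6)*T" by linarith
  have cT: "\<And>c x. x \<le> c * T \<Longrightarrow> c \<le> 25*(3*k+6) \<Longrightarrow> x \<le> 25*(3*k+6)*T"
  proof -
    fix c x assume "x \<le> c * T" "c \<le> 25*(3*k+6)"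
    moreover have "c * T \<le> 25*(3*k+6) * T" using \<open>c \<le> 25*(3*k+6)\<close> by (rule mult_le_mono1)
    ultimately show "x \<le> 25*(3*k+6)*T" by linarith
  qed
  have bd: "2 * b^d \<le> 25*(3*k+6)*T"
  proof -
    have "b = 2 \<or> b = 3 \<or> b = 4 \<or> b = 5 \<or> b = 6 \<or> b = 7 \<or> b = 8 \<or> b = 9 \<or> b = 10" using b by presburger
    then show ?thesis
    proof (elim disjE)
      assume bb: "b = 2"
      have "2^d \<le> 3*k+6" using v2'[of d] bb by simp
      then have "2 * b^d \<le> 2 * (3*k+6)" using bb by simp
      then show ?thesis using c1 by (rule order_trans)
    next
      assume bb: "b = 3"
      have "2*b^d \<le> 9 * T" using vp'[of 3 d] bb by simp
      then show ?thesis by (rule cT[where c=9]) simp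
    next
      assume bb: "b = 4"
      have "(2::nat)^(2*d) = 4^d" by (simp add: power_mult)
      then have "4^d \<le> 3*k+6" using v2'[of "2*d"] bb by simp
      then have "2 * b^d \<le> 2 * (3*k+6)" using bb by simp
      then show ?thesis using c1 by (rule order_trans)
    next
      assume bb: "b = 5"
      have "2*b^d \<le> 25 * T" using vp'[of 5 d] bb by simp
      then show ?thesis by (rule cT[where c=25]) simp
    next
      assume bb: "b = 6"
      have e6: "(6::nat)^d = 2^d * 3^d" by (simp add: power_mult_distrib[symmetric])
      then have dv2: "2^d dvd b^d" "3^d dvd b^d" using bb by simp_all
      have a2: "2^d \<le> 3*k+6" using v2'[OF dv2(1)] .
      have a3: "2*3^d \<le> 9 * T" using vp'[of 3 d] dv2(2) by simp
      have "2 * b^d = 2^d * (2 * 3^d)" using e6 bb by simp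
      also have "... \<le> (3*k+6) * (9*T)" using a2 a3 by (rule mult_le_mono)
      also have "... \<le> 25*(3*k+6)*T" by simp
      finally show ?thesis .
    next
      assume bb: "b = 7"
      have "2*b^d \<le> 49 * T" using vp'[of 7 d] bb by simp
      then show ?thesis by (rule cT[where c=49]) (use k0 in simp)
    next
      assume bb: "b = 8"
      have "(2::nat)^(3*d) = 8^d" by (simp add: power_mult)
      then have "8^d \<le> 3*k+6" using v2'[of "3*d"] bb by simp
      then have "2 * b^d \<le> 2 * (3*k+6)" using bb by simp
      then show ?thesis using c1 by (rule order_trans)
    next
      assume bb: "b = 9"
      have "(3::nat)^(2*d) = 9^d" by (simp add: power_mult)
      then have "2*b^d \<le> 9 * T" using vp'[of 3 "2*d"] bb by simp
      then show ?thesis by (rule cT[where c=9]) simp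
    next
      assume bb: "b = 10"
      have e10: "(10::nat)^d = 2^d * 5^d" by (simp add: power_mult_distrib[symmetric])
      then have dv2: "2^d dvd b^d" "5^d dvd b^d" using bb by simp_all
      have a2: "2^d \<le> 3*k+6" using v2'[OF dv2(1)] .
      have a3: "2*5^d \<le> 25 * T" using vp'[of 5 d] dv2(2) by simp
      have "2 * b^d = 2^d * (2 * 5^d)" using e10 bb by simp
      also have "... \<le> (3*k+6) * (25*T)" using a2 a3 by (rule mult_le_mono)
      also have "... = 25*(3*k+6)*T" by simp
      finally show ?thesis .
    qed
  qed
  show ?thesis
  proof (rule ccontr)
    assume "\<not> k \<le> 16"
    then have "25*(3*k+6)*T \<le> 2 * pell k" using growth T_def by simp
    then show False using bd lt by simp
  qed
qed

fun ip :: "nat \<Rightarrow> nat \<Rightarrow> nat \<Rightarrow> nat \<Rightarrow> bool" where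
  "ip 0 a c V = False"
| "ip (Suc f) a c V = (if V \<le> a then V = a else ip f c (2*c+a) V)"
lemma ip_num: "ip (numeral f) a c V = (if V \<le> a then V = a else ip (pred_numeral f) c (2*c+a) V)"
  by (simp add: numeral_eq_Suc)
fun ndigf :: "nat \<Rightarrow> nat \<Rightarrow> nat \<Rightarrow> nat" where
  "ndigf 0 b N = 1"
| "ndigf (Suc f) b N = (if N < b then 1 else Suc (ndigf f b (N div b)))"
lemma ndigf_num: "ndigf (numeral f) b N = (if N < b then 1 else Suc (ndigf (pred_numeral f) b (N div b)))"
  by (simp add: numeral_eq_Suc)

definition L3 :: "(nat \<times> nat \<times> nat) set" where
  "L3 = {(2,0,1),(2,1,1),(2,2,0),(2,3,1),(5,0,2),(5,1,2),(5,3,0),(6,0,0),(6,1,0)}"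

fun chkm :: "nat \<Rightarrow> nat \<Rightarrow> nat \<Rightarrow> nat \<Rightarrow> nat \<Rightarrow> nat \<Rightarrow> nat \<Rightarrow> nat \<Rightarrow> nat \<Rightarrow> bool" where
  "chkm b k B pk pc 0 m qa qc = True"
| "chkm b k B pk pc (Suc cnt) m qa qc =
     ((ip (B*qa+pk+1) pk pc (B*qa+pk) \<longrightarrow> (b,m,k) \<in> L3) \<and> chkm b k B pk pc cnt (Suc m) qc (2*qc+qa))"
lemma chkm_num: "chkm b k B pk pc (numeral cnt) m qa qc =
     ((ip (B*qa+pk+1) pk pc (B*qa+pk) \<longrightarrow> (b,m,k) \<in> L3) \<and> chkm b k B pk pc (pred_numeral cnt) (Suc m) qc (2*qc+qa))"
  by (simp add: numeral_eq_Suc)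

fun chkk :: "nat \<Rightarrow> nat \<Rightarrow> nat \<Rightarrow> nat \<Rightarrow> nat \<Rightarrow> bool" where
  "chkk b 0 k pa pc = True"
| "chkk b (Suc cnt) k pa pc =
    (chkm b k (b ^ (if pa = 0 then 1 else ndigf pa b pa)) pa pc (2*k+5) 0 2 2 \<and> chkk b cnt (Suc k) pc (2*pc+pa))"
lemma chkk_num: "chkk b (numeral cnt) k pa pc =
    (chkm b k (b ^ (if pa = 0 then 1 else ndigf pa b pa)) pa pc (2*k+5) 0 2 2 \<and> chkk b (pred_numeral cnt) (Suc k) pc (2*pc+pa))"
  by (simp add: numeral_eq_Suc)


lemma ip_complete: "pell n = V \<Longrightarrow> i \<le> n \<Longrightarrow> n - i < f \<Longrightarrow> ip f (pell i) (pell (Suc i)) V"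
proof (induction f arbitrary: i)
  case 0 then show ?case by simp
next
  case (Suc f)
  show ?case
  proof (cases "V \<le> pell i")
    case True
    then have "n \<le> i" using Suc.prems(1) pell_le_iff by metis
    then have "n = i" using Suc.prems(2) by simp
    then show ?thesis using Suc.prems(1) by simp
  next
    case False
    then have "i < n" using Suc.prems(1) pell_le_iff by (metis not_le)
    then have "ip f (pell (Suc i)) (pell (Suc (Suc i))) V" using Suc.IH[of "Suc i"] Suc.prems by simp
    then show ?thesis using False by simp
  qed
qed

lemma chkm_sound: "chkm b k B pk pc cnt m0 (pell_lucas m0) (pell_lucas (Suc m0)) \<Longrightarrow> m0 \<le> m \<Longrightarrow> m < m0 + cnt
  \<Longrightarrow> ip (B * pell_lucas m + pk + 1) pk pc (B * pell_lucas m + pk) \<Longrightarrow> (b,m,k) \<in> L3"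
proof (induction cnt arbitrary: m0)
  case 0 then show ?case by simp
next
  case (Suc cnt)
  show ?case
  proof (cases "m = m0")
    case True then show ?thesis using Suc.prems by simp
  next
    case False
    have "chkm b k B pk pc cnt (Suc m0) (pell_lucas (Suc m0)) (pell_lucas (Suc (Suc m0)))"
      using Suc.prems(1) by simp
    then show ?thesis using Suc.IH[of "Suc m0"] Suc.prems False by simp
  qed
qed

lemma chkk_sound: "chkk b cnt k0 (pell k0) (pell (Suc k0)) \<Longrightarrow> k0 \<le> k \<Longrightarrow> k < k0 + cnt
  \<Longrightarrow> chkm b k (b ^ (if pell k = 0 then 1 else ndigf (pell k) b (pell k))) (pell k) (pell (Suc k)) (2*k+5) 0 2 2"
proof (induction cnt arbitrary: k0)
  case 0 then show ?case by simp
next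
  case (Suc cnt)
  show ?case
  proof (cases "k = k0")
    case True then show ?thesis using Suc.prems(1) by (simp only: chkk.simps)
  next
    case False
    have "chkk b cnt (Suc k0) (pell (Suc k0)) (pell (Suc (Suc k0)))"
      using Suc.prems(1) by simp
    then show ?thesis using Suc.IH[of "Suc k0"] Suc.prems False by simp
  qed
qed

lemma ndigf_correct: "2 \<le> b \<Longrightarrow> 0 < d \<Longrightarrow> b^(d-1) \<le> N \<Longrightarrow> N < b^d \<Longrightarrow> N \<le> f \<Longrightarrow> ndigf f b N = d"
proof (induction f arbitrary: N d)
  case 0
  then have "N = 0" by simp
  then have "b^(d-1) = 0" using 0 by simp
  then show ?case using 0 by simp
next
  case (Suc f)
  show ?case
  proof (cases "N < b")
    case True
    have "d - 1 = 0"
    proof (rule ccontr)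
      assume "d - 1 \<noteq> 0"
      then have "b^1 \<le> b^(d-1)" using Suc.prems(1) by (intro power_increasing) auto
      then show False using True Suc.prems(3) by simp
    qed
    then show ?thesis using True Suc.prems(2) by simp
  next
    case False
    have d2: "2 \<le> d"
    proof (rule ccontr)
      assume "\<not> 2 \<le> d"
      then have "d = 1" using Suc.prems(2) by simp
      then show False using False Suc.prems(4) by simp
    qed
    have b0: "0 < b" using Suc.prems(1) by simp
    have e1: "b^(d-1) = b^(d-2) * b" using d2 by (metis Suc_diff_Suc Suc_1 diff_Suc_eq_diff_pred power_Suc2 less_le_trans lessI numeral_2_eq_2)
    have e2: "b^d = b^(d-1) * b" using d2 by (metis Suc_diff_1 less_le_trans pos2 power_Suc2)
    have "b^(d-2) \<le> N div b" using Suc.prems(3) e1 b0 by (simp add: less_eq_div_iff_mult_less_eq)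
    moreover have "d - 1 - 1 = d - 2" by simp
    ultimately have a1: "b^(d-1-1) \<le> N div b" by metis
    have a2: "N div b < b^(d-1)" using Suc.prems(4) e2 b0 by (simp add: div_less_iff_less_mult)
    have a3: "N div b \<le> f" using Suc.prems(5) False b0 Suc.prems(1)
      by (metis div_less_dividend le_less_trans less_Suc_eq_le one_less_numeral_iff semiring_norm(76) less_le_trans not_less)
    have "ndigf f b (N div b) = d - 1" using Suc.IH[OF Suc.prems(1) _ a1 a2 a3] d2 by simp
    then show ?thesis using False d2 by simp
  qed
qed

lemma num_digits_char:
  assumes b: "2 \<le> b" and N: "0 < N"
  shows "0 < num_digits b N \<and> b^(num_digits b N - 1) \<le> N \<and> N < b^(num_digits b N)"
proof -
  have bN: "real N \<ge> 1" using N by simp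
  have br: "real b > 1" using b by simp
  have lg: "log (real b) (real N) \<ge> 0" using bN br by simp
  obtain t :: nat where t: "\<lfloor>log (real b) (real N)\<rfloor> = int t"
    using lg by (metis zero_le_floor zero_le_imp_eq_int)
  have nd: "num_digits b N = t + 1" unfolding num_digits_def using N t by simp
  have "real b powr real_of_int (int t) \<le> real N \<and> real N < real b powr (real_of_int (int t) + 1)"
    using floor_log_eq_powr_iff[of "real N" "real b" "int t"] t N br by simp
  moreover have "real b powr real_of_int (int t) = real b ^ t" using br powr_realpow[of "real b" t] by simp
  moreover have "real b powr (real_of_int (int t) + 1) = real b ^ (t+1)" using br powr_realpow[of "real b" "t+1"] by (simp add: add.commute)
  ultimately have "real b ^ t \<le> real N \<and> real N < real b ^ (t+1)" by simp
  then have "b^t \<le> N \<and> N < b^(t+1)"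
    by (metis of_nat_le_iff of_nat_less_iff of_nat_power)
  then show ?thesis using nd by simp
qed

lemma nd_eq: "2 \<le> b \<Longrightarrow> num_digits b N = (if N = 0 then 1 else ndigf N b N)"
proof (cases "N = 0")
  case True then show ?thesis unfolding num_digits_def by simp
next
  case False
  assume b: "2 \<le> b"
  have c: "0 < num_digits b N \<and> b^(num_digits b N - 1) \<le> N \<and> N < b^(num_digits b N)"
    using num_digits_char[OF b] False by simp
  have "ndigf N b N = num_digits b N" using ndigf_correct[OF b] c by simp
  then show ?thesis using False by simp
qed

lemma ck2: "chkk 2 17 0 0 (Suc 0)" by (simp add: chkk_num chkm_num ip_num ndigf_num L3_def)
lemma ck3: "chkk 3 17 0 0 (Suc 0)" by (simp add: chkk_num chkm_num ip_num ndigf_num L3_def)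
lemma ck4: "chkk 4 17 0 0 (Suc 0)" by (simp add: chkk_num chkm_num ip_num ndigf_num L3_def)
lemma ck5: "chkk 5 17 0 0 (Suc 0)" by (simp add: chkk_num chkm_num ip_num ndigf_num L3_def)
lemma ck6: "chkk 6 17 0 0 (Suc 0)" by (simp add: chkk_num chkm_num ip_num ndigf_num L3_def)
lemma ck7: "chkk 7 17 0 0 (Suc 0)" by (simp add: chkk_num chkm_num ip_num ndigf_num L3_def)
lemma ck8: "chkk 8 17 0 0 (Suc 0)" by (simp add: chkk_num chkm_num ip_num ndigf_num L3_def)
lemma ck9: "chkk 9 17 0 0 (Suc 0)" by (simp add: chkk_num chkm_num ip_num ndigf_num L3_def)
lemma ck10: "chkk 10 17 0 0 (Suc 0)" by (simp add: chkk_num chkm_num ip_num ndigf_num L3_def)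
lemma ndigf1: "ndigf 1 b N = (if N < b then 1 else 2)" by (simp add: One_nat_def)

theorem theorem4:
  fixes b n m k :: nat
  assumes "2 \<le> b" and "b \<le> 10"
  shows "pell n = b ^ num_digits b (pell k) * pell_lucas m + pell k \<longleftrightarrow>
         (b, n, m, k) \<in> {(2, 3, 0, 1), (2, 3, 1, 1), (2, 4, 2, 0), (2, 5, 3, 1),
                          (5, 4, 0, 2), (5, 4, 1, 2), (5, 6, 3, 0),
                          (6, 4, 0, 0), (6, 4, 1, 0)}"
proof
  define B where "B = b ^ (if pell k = 0 then 1 else ndigf (pell k) b (pell k))"
  have NB: "b ^ num_digits b (pell k) = B" unfolding B_def using nd_eq[OF assms(1)] by simp
  assume eq0: "pell n = b ^ num_digits b (pell k) * pell_lucas m + pell k"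
  define d where "d = num_digits b (pell k)"
  have eq: "pell n = b^d * pell_lucas m + pell k" using eq0 d_def by simp
  have dk0: "k = 0 \<Longrightarrow> d = 1" unfolding d_def num_digits_def by simp
  have dk1: "0 < k \<Longrightarrow> pell k < b^d \<and> b^d \<le> b * pell k"
  proof -
    assume "0 < k"
    then have "0 < pell k" by (rule pell_pos)
    then have c: "0 < d \<and> b^(d - 1) \<le> pell k \<and> pell k < b^d"
      unfolding d_def by (rule num_digits_char[OF assms(1)])
    then have "b^d = b * b^(d-1)" by (cases d) auto
    then show ?thesis using c by simp
  qed
  have ms: "m \<le> 2*k+4 \<and> (0 < k \<longrightarrow>
     (\<forall>e. 2^e dvd b^d \<longrightarrow> 2^e \<le> 3*k+6) \<and>
     (\<forall>p e. (p = 3 \<or> p = 5 \<or> p = 7) \<longrightarrow> p^e dvd b^d \<longrightarrow> 2*p^e \<le> p^2 * ((3*k+6)*(k+6))))"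
    by (rule main_struct[OF assms eq dk0 dk1])
  have k16: "k \<le> 16"
  proof (cases "k = 0")
    case True then show ?thesis by simp
  next
    case False
    then have k0: "0 < k" by simp
    have lt: "pell k < b^d" using dk1[OF k0] by simp
    have v2: "\<forall>e. 2^e dvd b^d \<longrightarrow> 2^e \<le> 3*k+6" using ms k0 by simp
    have vp: "\<forall>p e. (p = 3 \<or> p = 5 \<or> p = 7) \<longrightarrow> p^e dvd b^d \<longrightarrow> 2*p^e \<le> p^2 * ((3*k+6)*(k+6))"
      using ms k0 by simp
    show ?thesis by (rule kbound[OF assms k0 lt v2 vp])
  qed
  have eqB: "pell n = B * pell_lucas m + pell k" using eq0 NB by simp
  have "pell k \<le> pell n" using eqB by simp
  then have kn: "k \<le> n" using pell_le_iff by blast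
  have "n - k < B * pell_lucas m + pell k + 1" using pell_ge[of n] eqB by simp
  then have ipc: "ip (B * pell_lucas m + pell k + 1) (pell k) (pell (Suc k)) (B * pell_lucas m + pell k)"
    using ip_complete[OF eqB kn] by blast
  have ck: "chkk b 17 0 (pell 0) (pell (Suc 0))"
  proof -
    have "b = 2 \<or> b = 3 \<or> b = 4 \<or> b = 5 \<or> b = 6 \<or> b = 7 \<or> b = 8 \<or> b = 9 \<or> b = 10" using assms by presburger
    then show ?thesis by (elim disjE) (simp_all add: ck2 ck3 ck4 ck5 ck6 ck7 ck8 ck9 ck10)
  qed
  have "chkm b k B (pell k) (pell (Suc k)) (2*k+5) 0 2 2"
    using chkk_sound[OF ck] k16 B_def by simp
  then have ch0: "chkm b k B (pell k) (pell (Suc k)) (2*k+5) 0 (pell_lucas 0) (pell_lucas (Suc 0))" by simp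
  have le0: "0 \<le> m" by simp
  have mm: "m < 0 + (2*k+5)" using ms by simp
  have L: "(b, m, k) \<in> L3" by (rule chkm_sound[OF ch0 le0 mm ipc])
  have p3: "pell n = 5 \<Longrightarrow> n = 3" using pell_inj[of n 3] pv3 by simp
  have p4: "pell n = 12 \<Longrightarrow> n = 4" using pell_inj[of n 4] pv4 by simp
  have p5: "pell n = 29 \<Longrightarrow> n = 5" using pell_inj[of n 5] pv5 by simp
  have p6: "pell n = 70 \<Longrightarrow> n = 6" using pell_inj[of n 6] pv6 by simp
  show "(b, n, m, k) \<in> {(2, 3, 0, 1), (2, 3, 1, 1), (2, 4, 2, 0), (2, 5, 3, 1),
                          (5, 4, 0, 2), (5, 4, 1, 2), (5, 6, 3, 0),
                          (6, 4, 0, 0), (6, 4, 1, 0)}"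
    using L eqB unfolding L3_def B_def
    apply (simp only: insert_iff empty_iff prod.inject)
    apply (elim disjE conjE)
    apply (simp_all add: pv0 pv1 pv2 qv0 qv1 qv2 qv3 ndigf1 ndigf_num)
    apply (auto dest: p3 p4 p5 p6)
    done
next
  assume "(b, n, m, k) \<in> {(2, 3, 0, 1), (2, 3, 1, 1), (2, 4, 2, 0), (2, 5, 3, 1),
                          (5, 4, 0, 2), (5, 4, 1, 2), (5, 6, 3, 0),
                          (6, 4, 0, 0), (6, 4, 1, 0)}"
  then show "pell n = b ^ num_digits b (pell k) * pell_lucas m + pell k"
    using nd_eq[OF assms(1)]
    apply (simp only: insert_iff empty_iff prod.inject)
    apply (elim disjE conjE)
    apply (simp_all add: pv0 pv1 pv2 pv3 pv4 pv5 pv6 qv0 qv1 qv2 qv3 ndigf1 ndigf_num)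
    done
qed

end
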